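(* Let $\mathfrak{X}=(X,\{R_i\}_{i=0}^{d+1})$ be a commutative association scheme with $R_d^\top=R_{d+1}$ and $R_i^\top=R_i$ for $0\le i\le d-1$, adjacency matrices $A_0,\dots,A_{d+1}$ and primitive idempotents $E_0,\dots,E_{d+1}$; let $V_i=E_i\mathbb{C}^{|X|}$. Let its symmetrization $\tilde{\mathfrak X}=(X,\{\tilde R_i\}_{i=0}^d)$ ($\tilde R_i=R_i$ for $i\le d-1$, $\tilde R_d=R_d\cup R_{d+1}$) be amorphic with primitive idempotents $\tilde E_0,\dots,\tilde E_d$ numbered so that the adjacency matrix $\tilde A_i$ of $\tilde R_i$ (valency $k_i$) satisfies $\tilde A_i\tilde E_0=k_i\tilde E_0$, $\tilde A_i\tilde E_i=b_i\tilde E_i$, $\tilde A_i\tilde E_j=a_i\tilde E_j$ for $1\le j\le d$, $j\ne i$, with $a_i\ne b_i$. Let $1\le i,j\le d+1$ with $E_i,E_j\in\{\tilde E_1,\ldots,\tilde E_{d-1}\}$, and let $1\le r,s\le d-1$ be such that the eigenvalues of $A_r$ on $V_i$ and $V_j$ are $a_r$ and $b_r$ respectively, and the eigenvalues of $A_s$ on $V_i$ and $V_j$ are $b_s$ and $a_s$ respectively. Then $A_r$ and $A_s$ are the only two matrices among $A_0,\dots,A_{d+1}$ having distinct eigenvalues on $V_i$ and $V_j$.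
   Context: Association scheme: finite set $X$ with a partition of $X\times X$ into relations $R_0$ (diagonal), $R_1,\dots$, closed under transposition, with constant intersection numbers; commutative if these are symmetric in the lower indices. Adjacency matrices are the $01$-matrices of the relations; the primitive idempotents of the (commutative) Bose–Mesner algebra satisfy $A_iE_j=p_i(j)E_j$, and $p_i(j)$ is called the eigenvalue of $A_i$ on $V_j$. A symmetric scheme is amorphic if merging the nondiagonal relations along any partition of their index set into nonempty parts gives an association scheme. *)

theory Defs
  imports "HOL-Analysis.Analysis" "HOL-Library.Disjoint_Sets"
begin

text \<open>The ground set X is the (finite) type 'n; matrices are complex X x X matrices
  of type complex^'n^'n, multiplied with the library product (**).\<close>

definition adj :: "('n \<times> 'n) set \<Rightarrow> complex^'n^'n" where
  "adj R = (\<chi> x y. if (x, y) \<in> R then 1 else 0)"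

definition msc :: "complex \<Rightarrow> complex^'n^'n \<Rightarrow> complex^'n^'n" where
  "msc c M = (\<chi> x y. c * M $ x $ y)"

definition assoc_scheme :: "'i set \<Rightarrow> 'i \<Rightarrow> ('i \<Rightarrow> ('n::finite \<times> 'n) set) \<Rightarrow> bool" where
  "assoc_scheme I i0 R \<longleftrightarrow>
     finite I \<and> i0 \<in> I \<and> R i0 = Id \<and>
     (\<forall>i\<in>I. R i \<noteq> {}) \<and>
     (\<forall>i\<in>I. \<forall>j\<in>I. i \<noteq> j \<longrightarrow> R i \<inter> R j = {}) \<and>
     (\<Union>i\<in>I. R i) = UNIV \<and>
     (\<forall>i\<in>I. \<exists>j\<in>I. (R i)\<inverse> = R j) \<and>
     (\<forall>i\<in>I. \<forall>j\<in>I. \<forall>h\<in>I. \<exists>p. \<forall>x y. (x, y) \<in> R h \<longrightarrow>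
          card {z. (x, z) \<in> R i \<and> (z, y) \<in> R j} = p)"

text \<open>Commutativity: the intersection numbers p^h_ij are symmetric in i, j.\<close>
definition commutative_scheme :: "'i set \<Rightarrow> ('i \<Rightarrow> ('n::finite \<times> 'n) set) \<Rightarrow> bool" where
  "commutative_scheme I R \<longleftrightarrow>
     (\<forall>i\<in>I. \<forall>j\<in>I. \<forall>x y.
        card {z. (x, z) \<in> R i \<and> (z, y) \<in> R j} = card {z. (x, z) \<in> R j \<and> (z, y) \<in> R i})"

definition symmetric_scheme :: "'i set \<Rightarrow> 'i \<Rightarrow> ('i \<Rightarrow> ('n::finite \<times> 'n) set) \<Rightarrow> bool" where
  "symmetric_scheme I i0 R \<longleftrightarrow> assoc_scheme I i0 R \<and> (\<forall>i\<in>I. (R i)\<inverse> = R i)"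

definition amorphic :: "'i set \<Rightarrow> 'i \<Rightarrow> ('i \<Rightarrow> ('n::finite \<times> 'n) set) \<Rightarrow> bool" where
  "amorphic I i0 R \<longleftrightarrow> symmetric_scheme I i0 R \<and>
     (\<forall>P. partition_on (I - {i0}) P \<longrightarrow>
          assoc_scheme (insert {i0} P) {i0} (\<lambda>B. \<Union>i\<in>B. R i))"

definition bose_mesner :: "'i set \<Rightarrow> ('i \<Rightarrow> ('n::finite \<times> 'n) set) \<Rightarrow> (complex^'n^'n) set" where
  "bose_mesner I R = {(\<Sum>i\<in>I. msc (c i) (adj (R i))) | c. True}"

definition primitive_idempotents ::
  "'i set \<Rightarrow> ('i \<Rightarrow> ('n::finite \<times> 'n) set) \<Rightarrow> 'j set \<Rightarrow> ('j \<Rightarrow> complex^'n^'n) \<Rightarrow> bool" where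
  "primitive_idempotents I R J E \<longleftrightarrow>
     finite J \<and> card J = card I \<and>
     (\<forall>j\<in>J. E j \<in> bose_mesner I R \<and> E j \<noteq> 0) \<and>
     (\<forall>j\<in>J. \<forall>l\<in>J. E j ** E l = (if j = l then E j else 0)) \<and>
     (\<Sum>j\<in>J. E j) = mat 1"

text \<open>The eigenvalue p of A on V = E C^X, i.e. A E = p E.\<close>
definition eigenvalue_on :: "complex^'n^'n \<Rightarrow> complex^'n^'n \<Rightarrow> complex" where
  "eigenvalue_on A E = (THE p. A ** E = msc p E)"

definition symmetrization :: "(nat \<Rightarrow> ('n \<times> 'n) set) \<Rightarrow> nat \<Rightarrow> nat \<Rightarrow> ('n \<times> 'n) set" where
  "symmetrization R d i = (if i = d then R d \<union> R (Suc d) else R i)"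

end

theory Submission
  imports Defs
begin

interpretation mvs: vector_space "msc :: complex \<Rightarrow> complex^'n^'n \<Rightarrow> complex^'n^'n"
  by unfold_locales (auto simp: msc_def vec_eq_iff algebra_simps)

lemma msc_mul_left: "msc c A ** B = msc c (A ** B)"
  by (simp add: msc_def matrix_matrix_mult_def vec_eq_iff sum_distrib_left mult.assoc)

lemma msc_mul_right: "A ** msc c B = msc c (A ** B)"
  by (simp add: msc_def matrix_matrix_mult_def vec_eq_iff sum_distrib_left mult.left_commute)

lemma mul_rdistrib: "(A + B) ** (C::'a::semiring_1^'n^'m) = A ** C + B ** C"
  by (simp add: matrix_matrix_mult_def vec_eq_iff sum.distrib distrib_right)

lemma sum_mul_right: "finite S \<Longrightarrow> (\<Sum>x\<in>S. f x) ** (C::'a::semiring_1^'n^'m) = (\<Sum>x\<in>S. f x ** C)"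
  by (induction S rule: finite_induct) (auto simp: mul_rdistrib)

lemma sum_mul_left: "finite S \<Longrightarrow> (C::'a::semiring_1^'n^'m) ** (\<Sum>x\<in>S. f x) = (\<Sum>x\<in>S. C ** f x)"
  by (induction S rule: finite_induct) (auto simp: matrix_add_ldistrib)

lemma msc_zero[simp]: "msc c 0 = 0"
  by (simp add: msc_def vec_eq_iff)

lemma msc_cancel: "msc p E = msc q E \<Longrightarrow> E \<noteq> 0 \<Longrightarrow> p = q"
proof -
  assume h: "msc p E = msc q E" "E \<noteq> 0"
  then obtain x y where "E $ x $ y \<noteq> 0" by (auto simp: vec_eq_iff)
  moreover have "(msc p E) $ x $ y = (msc q E) $ x $ y" using h(1) by (simp only:)
  ultimately show ?thesis by (simp add: msc_def)
qed

lemma eig: "A ** E = msc p E \<Longrightarrow> E \<noteq> 0 \<Longrightarrow> eigenvalue_on A E = p"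
  unfolding eigenvalue_on_def by (rule the_equality) (auto dest: msc_cancel)

lemma bm_span: "bose_mesner I R \<subseteq> mvs.span (adj ` R ` I)"
  unfolding bose_mesner_def
proof clarify
  fix c show "(\<Sum>i\<in>I. msc (c i) (adj (R i))) \<in> mvs.span (adj ` R ` I)"
    by (rule mvs.span_sum, rule mvs.span_scale, rule mvs.span_base) auto
qed

lemma orth_off:
  assumes "\<forall>j\<in>J. \<forall>l\<in>J. E j ** E l = (if j = l then E j else 0)" "l \<in> J"
  shows "\<forall>w\<in>E ` J - {E l}. w ** E l = 0 \<and> E l ** w = 0"
proof
  fix w assume "w \<in> E ` J - {E l}"
  then obtain x where x: "x \<in> J" "w = E x" "x \<noteq> l" by auto
  then show "w ** E l = 0 \<and> E l ** w = 0" using assms by simp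
qed

lemma bm_diag:
  assumes pi: "primitive_idempotents I R J E" and fI: "finite I" and m: "m \<in> I" and i: "i \<in> J"
  shows "\<exists>p. adj (R m) ** E i = msc p (E i) \<and> E i ** adj (R m) = msc p (E i)"
proof -
  let ?T = "E ` J" and ?S = "adj ` R ` I" and ?A = "adj (R m)"
  have fJ: "finite J" and cJ: "card J = card I" and inB: "\<forall>j\<in>J. E j \<in> bose_mesner I R"
    and nz: "\<forall>j\<in>J. E j \<noteq> 0" and orth: "\<forall>j\<in>J. \<forall>l\<in>J. E j ** E l = (if j = l then E j else 0)"
    using pi unfolding primitive_idempotents_def by auto
  have injE: "inj_on E J"
  proof (rule inj_onI)
    fix x y assume xy: "x \<in> J" "y \<in> J" "E x = E y"
    show "x = y"
    proof (rule ccontr)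
      assume "x \<noteq> y"
      moreover have "E x ** E y = (if x = y then E x else 0)" using orth xy(1,2) by blast
      ultimately have "E x ** E y = 0" by simp
      moreover have "E x ** E x = E x" using orth xy by auto
      then have "E x ** E y = E x" using xy by simp
      ultimately show False using nz xy by auto
    qed
  qed
  have cT: "card ?T = card I" using injE cJ by (simp add: card_image)
  have TS: "?T \<subseteq> mvs.span ?S" using inB bm_span by blast
  have fS: "finite ?S" using fI by simp
  have cS: "card ?S \<le> card I" using fI by (metis card_image_le finite_imageI image_comp)
  have fT: "finite ?T" using fJ by simp
  have cz: "c v = 0" if sum0: "(\<Sum>v\<in>?T. msc (c v) v) = 0" and v: "v \<in> ?T" for c v
  proof -
    obtain l where l: "l \<in> J" "v = E l" using v by auto
    have "0 = (\<Sum>w\<in>?T. msc (c w) w) ** E l" using sum0 by simp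
    also have "\<dots> = (\<Sum>w\<in>?T. msc (c w) (w ** E l))"
      using fJ by (simp add: sum_mul_right msc_mul_left)
    also have "\<dots> = msc (c (E l)) (E l ** E l) + (\<Sum>w\<in>?T - {E l}. msc (c w) (w ** E l))"
      using fT l by (meson imageI sum.remove)
    also have "(\<Sum>w\<in>?T - {E l}. msc (c w) (w ** E l)) = 0"
      using orth_off[OF orth l(1)] by (intro sum.neutral) simp
    finally have "msc (c (E l)) (E l) = msc 0 (E l)" using orth l
      by (simp add: msc_def vec_eq_iff)
    then show "c v = 0" using msc_cancel nz l by metis
  qed
  have indT: "mvs.independent ?T"
    using mvs.dependent_finite[OF fT] cz by blast
  have AT: "?A \<in> mvs.span ?T"
  proof (rule ccontr)
    assume nA: "?A \<notin> mvs.span ?T"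
    then have "?A \<notin> ?T" using mvs.span_base by blast
    have "mvs.independent (insert ?A ?T)" using indT nA mvs.independent_insertI by blast
    moreover have "insert ?A ?T \<subseteq> mvs.span ?S" using TS m by (auto intro: mvs.span_base)
    ultimately have "card (insert ?A ?T) \<le> card ?S" using mvs.independent_span_bound fS by blast
    moreover have "card (insert ?A ?T) = Suc (card ?T)" using fJ \<open>?A \<notin> ?T\<close> by simp
    ultimately show False using cT cS by simp
  qed
  then obtain u where u: "?A = (\<Sum>w\<in>?T. msc (u w) w)"
    using mvs.span_finite[of ?T] fJ by auto
  have "?A ** E i = (\<Sum>w\<in>?T. msc (u w) (w ** E i))"
    using fJ u by (simp add: sum_mul_right msc_mul_left)
  also have "\<dots> = msc (u (E i)) (E i ** E i) + (\<Sum>w\<in>?T - {E i}. msc (u w) (w ** E i))"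
    using fT i by (meson imageI sum.remove)
  also have "(\<Sum>w\<in>?T - {E i}. msc (u w) (w ** E i)) = 0"
    using orth_off[OF orth i] by (intro sum.neutral) simp
  finally have 1: "?A ** E i = msc (u (E i)) (E i)" using orth i by simp
  have "E i ** ?A = (\<Sum>w\<in>?T. msc (u w) (E i ** w))"
    using fJ u by (simp add: sum_mul_left msc_mul_right)
  also have "\<dots> = msc (u (E i)) (E i ** E i) + (\<Sum>w\<in>?T - {E i}. msc (u w) (E i ** w))"
    using fT i by (meson imageI sum.remove)
  also have "(\<Sum>w\<in>?T - {E i}. msc (u w) (E i ** w)) = 0"
    using orth_off[OF orth i] by (intro sum.neutral) simp
  finally have 2: "E i ** ?A = msc (u (E i)) (E i)" using orth i by simp
  show ?thesis using 1 2 by blast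
qed

theorem lemma3p4:
  fixes R :: "nat \<Rightarrow> ('n::finite \<times> 'n) set"
    and d :: nat
    and E Et :: "nat \<Rightarrow> complex^'n^'n"
    and k :: "nat \<Rightarrow> nat"
    and a b :: "nat \<Rightarrow> complex"
    and i j r s :: nat
  assumes scheme: "assoc_scheme {0..d+1} 0 R"
    and comm: "commutative_scheme {0..d+1} R"
    and transp_d: "(R d)\<inverse> = R (d+1)"
    and sym_rest: "\<forall>l<d. (R l)\<inverse> = R l"
    and idem: "primitive_idempotents {0..d+1} R {0..d+1} E"
    and amor: "amorphic {0..d} 0 (symmetrization R d)"
    and idem_t: "primitive_idempotents {0..d} (symmetrization R d) {0..d} Et"
    and valency: "\<forall>l\<in>{1..d}. \<forall>x. card {y. (x, y) \<in> symmetrization R d l} = k l"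
    and num0: "\<forall>l\<in>{1..d}. adj (symmetrization R d l) ** Et 0 = msc (of_nat (k l)) (Et 0)"
    and numb: "\<forall>l\<in>{1..d}. adj (symmetrization R d l) ** Et l = msc (b l) (Et l)"
    and numa: "\<forall>l\<in>{1..d}. \<forall>m\<in>{1..d}. m \<noteq> l \<longrightarrow>
                 adj (symmetrization R d l) ** Et m = msc (a l) (Et m)"
    and ab: "\<forall>l\<in>{1..d}. a l \<noteq> b l"
    and i: "i \<in> {1..d+1}" and j: "j \<in> {1..d+1}"
    and Ei: "\<exists>l\<in>{1..d-1}. E i = Et l"
    and Ej: "\<exists>l\<in>{1..d-1}. E j = Et l"
    and r: "r \<in> {1..d-1}" and s: "s \<in> {1..d-1}"
    and r_i: "eigenvalue_on (adj (R r)) (E i) = a r"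
    and r_j: "eigenvalue_on (adj (R r)) (E j) = b r"
    and s_i: "eigenvalue_on (adj (R s)) (E i) = b s"
    and s_j: "eigenvalue_on (adj (R s)) (E j) = a s"
  shows "r \<noteq> s \<and>
         (\<forall>m\<in>{0..d+1}. eigenvalue_on (adj (R m)) (E i) \<noteq> eigenvalue_on (adj (R m)) (E j)
                          \<longleftrightarrow> m = r \<or> m = s)"
proof -
  define S where "S = symmetrization R d"
  have sc: "finite {0..d+1}" "R 0 = Id" "\<forall>x\<in>{0..d+1}. \<forall>y\<in>{0..d+1}. x \<noteq> y \<longrightarrow> R x \<inter> R y = {}"
    using scheme unfolding assoc_scheme_def by auto
  have Etnz: "\<forall>l\<in>{0..d}. Et l \<noteq> 0" and EtB: "\<forall>l\<in>{0..d}. Et l \<in> bose_mesner {0..d} S"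
    using idem_t unfolding primitive_idempotents_def S_def by auto
  have Enz: "\<forall>l\<in>{0..d+1}. E l \<noteq> 0"
    using idem unfolding primitive_idempotents_def by auto
  obtain l1 where l1: "l1 \<in> {1..d-1}" "E i = Et l1" using Ei by blast
  obtain l2 where l2: "l2 \<in> {1..d-1}" "E j = Et l2" using Ej by blast
  have d2: "d \<ge> 2" using r by auto
  have SR: "\<And>m. m \<noteq> d \<Longrightarrow> S m = R m" by (simp add: S_def symmetrization_def)
  have ev: "eigenvalue_on (adj (R m)) (Et l) = (if l = m then b m else a m)"
    if "m \<in> {1..d-1}" "l \<in> {1..d-1}" for m l
  proof (cases "l = m")
    have "m \<noteq> d" using that by auto
    note SR = SR[OF this]
    case True
    have "m \<in> {1..d}" using that by auto
    from numb[rule_format, OF this] have "adj (R m) ** Et l = msc (b m) (Et l)" using True SR S_def by auto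
    moreover have "Et l \<noteq> 0" using Etnz that by auto
    ultimately show ?thesis using eig True by auto
  next
    case False
    have "m \<noteq> d" using that by auto
    note SR = SR[OF this]
    have "m \<in> {1..d}" "l \<in> {1..d}" using that by auto
    from numa[rule_format, OF this] have "adj (R m) ** Et l = msc (a m) (Et l)" using False SR S_def by auto
    moreover have "Et l \<noteq> 0" using Etnz that by auto
    ultimately show ?thesis using eig False by auto
  qed
  have abr: "a r \<noteq> b r" "a s \<noteq> b s" using ab r s by auto
  have "l1 \<noteq> r" using ev[OF r l1(1)] r_i l1 abr by auto
  moreover have "l2 = r" using ev[OF r l2(1)] r_j l2 abr by (auto split: if_splits)
  moreover have "l1 = s" using ev[OF s l1(1)] s_i l1 abr by (auto split: if_splits)
  moreover have "l2 \<noteq> s" using ev[OF s l2(1)] s_j l2 abr by auto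
  ultimately have rs: "r \<noteq> s" "l2 = r" "l1 = s" "l1 \<noteq> l2" by auto
  have Ssym: "(x, y) \<in> S l \<longleftrightarrow> (y, x) \<in> S l" if "l \<in> {0..d}" for l x y
  proof (cases "l = d")
    case True
    then show ?thesis using transp_d by (auto simp: S_def symmetrization_def)
  next
    case False
    then have "l < d" using that by auto
    then have "(R l)\<inverse> = R l" using sym_rest by auto
    then show ?thesis using False by (auto simp: S_def symmetrization_def)
  qed
  have Etsym: "transpose (Et l) = Et l" if hl: "l \<in> {0..d}" for l
  proof -
    have "Et l \<in> bose_mesner {0..d} S" using EtB hl by auto
    then obtain c where c: "Et l = (\<Sum>h\<in>{0..d}. msc (c h) (adj (S h)))"
      unfolding bose_mesner_def by blast
    have adjc: "adj (S h) $ y $ x = adj (S h) $ x $ y" if "h \<in> {0..d}" for h x y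
      using Ssym[OF that, of x y] by (simp add: adj_def)
    show ?thesis unfolding c
      by (simp add: vec_eq_iff transpose_def sum_component msc_def, intro allI sum.cong refl)
         (simp add: adjc)
  qed
  have trmsc: "transpose (msc p M) = msc p (transpose M)" for p and M :: "complex^'n^'n"
    by (simp add: vec_eq_iff transpose_def msc_def)
  have tradj: "transpose (adj (R d)) = adj (R (d+1))"
    using transp_d by (auto simp: vec_eq_iff transpose_def adj_def)
  have addadj: "adj (S d) = adj (R d) + adj (R (d+1))"
  proof -
    have disj: "R d \<inter> R (d+1) = {}" using sc(3) by simp
    show ?thesis unfolding vec_eq_iff
    proof (intro allI)
      fix x y
      show "adj (S d) $ x $ y = (adj (R d) + adj (R (d+1))) $ x $ y"
        using disj by (cases "(x, y) \<in> R d"; cases "(x, y) \<in> R (d+1)")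
          (auto simp: adj_def S_def symmetrization_def)
    qed
  qed
  have half: "eigenvalue_on (adj (R d)) (E h) = a d / 2 \<and> eigenvalue_on (adj (R (d+1))) (E h) = a d / 2"
    if h: "h \<in> {0..d+1}" "l \<in> {1..d-1}" "E h = Et l" for h l
  proof -
    obtain p where p: "adj (R d) ** E h = msc p (E h)" "E h ** adj (R d) = msc p (E h)"
      using bm_diag[OF idem sc(1) _ h(1), of d] by auto
    obtain q where q: "adj (R (d+1)) ** E h = msc q (E h)"
      using bm_diag[OF idem sc(1) _ h(1), of "d+1"] by auto
    have symh: "transpose (E h) = E h" using Etsym h by auto
    have "transpose (E h ** adj (R d)) = adj (R (d+1)) ** E h"
      by (simp add: matrix_transpose_mul tradj symh)
    then have "adj (R (d+1)) ** E h = msc p (E h)" using p(2) trmsc symh by metis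
    have "adj (S d) ** E h = msc (a d) (E h)" using numa h d2 S_def by auto
    moreover have "adj (S d) ** E h = msc (p + p) (E h)"
      using p(1) \<open>adj (R (d+1)) ** E h = msc p (E h)\<close>
      by (simp add: addadj mul_rdistrib msc_def vec_eq_iff algebra_simps)
    ultimately have "p + p = a d" using msc_cancel Enz h by metis
    then have "p = a d / 2" by (simp add: field_simps)
    moreover have "E h \<noteq> 0" using Enz h by auto
    ultimately show ?thesis using eig[OF p(1)] eig[OF \<open>adj (R (d+1)) ** E h = msc p (E h)\<close>] by simp
  qed
  have hi: "eigenvalue_on (adj (R d)) (E i) = a d / 2 \<and> eigenvalue_on (adj (R (d+1))) (E i) = a d / 2"
    using half[of i l1] i l1 by auto
  have hj: "eigenvalue_on (adj (R d)) (E j) = a d / 2 \<and> eigenvalue_on (adj (R (d+1))) (E j) = a d / 2"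
    using half[of j l2] j l2 by auto
  have ev0: "eigenvalue_on (adj (R 0)) (E h) = 1" if "h \<in> {0..d+1}" for h
  proof -
    have "adj (R 0) = mat 1" using sc(2) by (simp add: adj_def mat_def vec_eq_iff)
    then have "adj (R 0) ** E h = msc 1 (E h)" by (simp add: msc_def)
    from eig[OF this] show ?thesis using Enz that by auto
  qed
  show ?thesis
  proof (intro conjI ballI)
    show "r \<noteq> s" by (rule rs(1))
  next
    fix m assume m: "m \<in> {0..d+1}"
    consider "m = 0" | "m \<in> {1..d-1}" | "m = d" | "m = d+1" using m by fastforce
    then show "(eigenvalue_on (adj (R m)) (E i) \<noteq> eigenvalue_on (adj (R m)) (E j)) = (m = r \<or> m = s)"
    proof cases
      case 1 then show ?thesis using ev0 i j r s by auto
    next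
      case 2 then have "a m \<noteq> b m" using ab by auto
      then show ?thesis using ev[OF 2 l1(1)] ev[OF 2 l2(1)] l1 l2 rs by auto
    next
      case 3
      have "eigenvalue_on (adj (R m)) (E i) = eigenvalue_on (adj (R m)) (E j)"
        using hi hj 3 by metis
      moreover have "m \<noteq> r" "m \<noteq> s" using r s 3 by auto
      ultimately show ?thesis by simp
    next
      case 4
      have "eigenvalue_on (adj (R m)) (E i) = eigenvalue_on (adj (R m)) (E j)"
        using hi hj 4 by metis
      moreover have "m \<noteq> r" "m \<noteq> s" using r s 4 by auto
      ultimately show ?thesis by simp
    qed
  qed
qed

end
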